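(* Let $Q$ be an $[[n,k,d]]$ stabilizer code with codespace projector $P_Q$ whose Shor–Laflamme enumerators satisfy $A_{2i+1}=0$ for all $i$. Then $$B_n\le\frac{1}{L(n)}\,\frac{3^n}{2^{n-k}}.$$
   Context: For an $[[n,k,d]]$ stabilizer code with projector $P_Q$ onto its $2^k$-dimensional codespace, the Shor–Laflamme enumerators are $A_i=\frac{1}{2^{2k}}\sum_{\sigma:w(\sigma)=i}\mathrm{Tr}[\sigma P_Q]\mathrm{Tr}[\sigma^\dagger P_Q]$ and $B_i=\frac{1}{2^k}\sum_{\sigma:w(\sigma)=i}\mathrm{Tr}[\sigma P_Q\sigma^\dagger P_Q]$, where $\sigma$ ranges over the $n$-qubit Pauli operators $\{\mathbb{1},X,Y,Z\}^{\otimes n}$ and $w(\sigma)$ is the number of non-identity tensor factors. The quaternary Krawtchouk polynomials are $K_w(l)=\sum_{j=0}^{w}\binom{l}{j}\binom{n-l}{w-j}(-1)^j3^{w-j}$. $L(n)$ is the optimal value of the linear program in variables $y_0,\dots,y_{\lfloor n/2\rfloor}\in\mathbb{R}$: minimize $3^ny_0$ subject to $y_j\ge0$ for all $j$, $\sum_{j=0}^{\lfloor n/2\rfloor}K_i(2j)y_j\ge0$ for $i=0,\dots,n$, and $\sum_{j=0}^{\lfloor n/2\rfloor}3^{n-2j}y_j=1$. *)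

theory Defs
  imports "Jordan_Normal_Form.Schur_Decomposition"
begin

definition tr :: "complex mat \<Rightarrow> complex" where
  "tr A = (\<Sum>i<dim_row A. A $$ (i, i))"

definition kron :: "complex mat \<Rightarrow> complex mat \<Rightarrow> complex mat" where
  "kron A B = mat (dim_row A * dim_row B) (dim_col A * dim_col B)
     (\<lambda>(i, j). A $$ (i div dim_row B, j div dim_col B) * B $$ (i mod dim_row B, j mod dim_col B))"

text \<open>Single-qubit Paulis, indexed 0 = identity, 1 = X, 2 = Y, 3 = Z.\<close>
definition pauli1 :: "nat \<Rightarrow> complex mat" where
  "pauli1 a = (if a = 1 then mat_of_rows_list 2 [[0, 1], [1, 0]]
    else if a = 2 then mat_of_rows_list 2 [[0, -\<i>], [\<i>, 0]]
    else if a = 3 then mat_of_rows_list 2 [[1, 0], [0, -1]]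
    else 1\<^sub>m 2)"

fun pauli :: "nat list \<Rightarrow> complex mat" where
  "pauli [] = 1\<^sub>m 1"
| "pauli (a # as) = kron (pauli1 a) (pauli as)"

definition pauli_strings :: "nat \<Rightarrow> nat list set" where
  "pauli_strings n = {p. length p = n \<and> (\<forall>a\<in>set p. a < 4)}"

definition pweight :: "nat list \<Rightarrow> nat" where
  "pweight p = length (filter (\<lambda>a. a \<noteq> 0) p)"

definition pauli_group :: "nat \<Rightarrow> complex mat set" where
  "pauli_group n = {(\<i> ^ m) \<cdot>\<^sub>m pauli p | m p. m < 4 \<and> p \<in> pauli_strings n}"

definition stabilizer_group :: "nat \<Rightarrow> complex mat set \<Rightarrow> bool" where
  "stabilizer_group n S \<longleftrightarrow>
     S \<subseteq> pauli_group n \<and> 1\<^sub>m (2 ^ n) \<in> S \<and>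
     (\<forall>s\<in>S. \<forall>t\<in>S. s * t \<in> S) \<and>
     (\<forall>s\<in>S. \<forall>t\<in>S. s * t = t * s) \<and>
     - 1\<^sub>m (2 ^ n) \<notin> S"

definition codespace :: "nat \<Rightarrow> complex mat set \<Rightarrow> complex vec set" where
  "codespace n S = {v \<in> carrier_vec (2 ^ n). \<forall>s\<in>S. s *\<^sub>v v = v}"

definition codespace_projector :: "nat \<Rightarrow> complex mat set \<Rightarrow> complex mat \<Rightarrow> bool" where
  "codespace_projector n S P \<longleftrightarrow>
     P \<in> carrier_mat (2 ^ n) (2 ^ n) \<and> mat_adjoint P = P \<and> P * P = P \<and>
     (\<forall>v \<in> carrier_vec (2 ^ n). P *\<^sub>v v = v \<longleftrightarrow> v \<in> codespace n S)"

text \<open>Q is an [[n,k]] stabilizer code with stabilizer S and codespace projector P;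
  the codespace has dimension 2^k (= rank = trace of the orthogonal projector P).
  The distance d plays no role in the statement.\<close>
definition stabilizer_code :: "nat \<Rightarrow> nat \<Rightarrow> complex mat set \<Rightarrow> complex mat \<Rightarrow> bool" where
  "stabilizer_code n k S P \<longleftrightarrow>
     stabilizer_group n S \<and> codespace_projector n S P \<and> tr P = of_nat (2 ^ k)"

definition SL_A :: "nat \<Rightarrow> nat \<Rightarrow> complex mat \<Rightarrow> nat \<Rightarrow> complex" where
  "SL_A n k P i = (1 / 2 ^ (2 * k)) *
     (\<Sum>p \<in> {p \<in> pauli_strings n. pweight p = i}.
        tr (pauli p * P) * tr (mat_adjoint (pauli p) * P))"

definition SL_B :: "nat \<Rightarrow> nat \<Rightarrow> complex mat \<Rightarrow> nat \<Rightarrow> complex" where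
  "SL_B n k P i = (1 / 2 ^ k) *
     (\<Sum>p \<in> {p \<in> pauli_strings n. pweight p = i}.
        tr (pauli p * P * mat_adjoint (pauli p) * P))"

definition kraw :: "nat \<Rightarrow> nat \<Rightarrow> nat \<Rightarrow> real" where
  "kraw n w l = (\<Sum>j = 0..w. real (l choose j) * real ((n - l) choose (w - j)) * (-1) ^ j * 3 ^ (w - j))"

definition LP_feasible :: "nat \<Rightarrow> (nat \<Rightarrow> real) \<Rightarrow> bool" where
  "LP_feasible n y \<longleftrightarrow>
     (\<forall>j \<le> n div 2. y j \<ge> 0) \<and>
     (\<forall>i \<le> n. (\<Sum>j = 0..n div 2. kraw n i (2 * j) * y j) \<ge> 0) \<and>
     (\<Sum>j = 0..n div 2. 3 ^ (n - 2 * j) * y j) = 1"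

text \<open>Optimal value of the LP (infimum of the objective over feasible points;
  only y 0 .. y (n div 2) are variables).\<close>
definition L :: "nat \<Rightarrow> real" where
  "L n = Inf {3 ^ n * y 0 | y. LP_feasible n y}"

end

theory Submission
  imports Defs
begin

lemma adj_dim[simp]: "dim_row (mat_adjoint A) = dim_col A" "dim_col (mat_adjoint A) = dim_row A"
  by (auto simp: mat_adjoint_def)

lemma adj_idx: "i < dim_col A \<Longrightarrow> j < dim_row A \<Longrightarrow> mat_adjoint A $$ (i,j) = conjugate (A $$ (j,i))"
  by (simp add: mat_adjoint_def mat_of_rows_index)

lemma pauli1_dim[simp]: "dim_row (pauli1 a) = 2" "dim_col (pauli1 a) = 2"
  by (auto simp: pauli1_def mat_of_rows_list_def)

lemma pauli_dim[simp]: "dim_row (pauli p) = 2 ^ length p" "dim_col (pauli p) = 2 ^ length p"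
  by (induct p) (auto simp: kron_def)

lemma pauli_cons_idx:
  assumes "i < 2 * 2 ^ length p" "j < 2 * 2 ^ length p"
  shows "pauli (q # p) $$ (i,j) = pauli1 q $$ (i div 2 ^ length p, j div 2 ^ length p) * pauli p $$ (i mod 2 ^ length p, j mod 2 ^ length p)"
  using assms by (simp add: kron_def)

lemma strings_Suc: "pauli_strings (Suc n) = (\<lambda>(q,p). q # p) ` ({..<4} \<times> pauli_strings n)"
proof -
  have "x \<in> (\<lambda>(q,p). q # p) ` ({..<4} \<times> pauli_strings n)" if "x \<in> pauli_strings (Suc n)" for x
  proof (cases x)
    case Nil then show ?thesis using that by (simp add: pauli_strings_def)
  next
    case (Cons a l) then show ?thesis using that
      by (auto simp: pauli_strings_def image_iff intro!: bexI[where x="(a,l)"])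
  qed
  then show ?thesis by (auto simp: pauli_strings_def)
qed

lemma strings_finite: "finite (pauli_strings n)"
  by (induct n) (auto simp: strings_Suc, simp add: pauli_strings_def)

lemma sum_strings_Suc:
  "(\<Sum>p\<in>pauli_strings (Suc n). f p) = (\<Sum>q<4. \<Sum>p\<in>pauli_strings n. f (q # p))"
proof -
  have "inj_on (\<lambda>(q,p). q # p) ({..<4::nat} \<times> pauli_strings n)" by (auto simp: inj_on_def)
  then have "(\<Sum>p\<in>pauli_strings (Suc n). f p) = (\<Sum>x\<in>{..<4} \<times> pauli_strings n. f (case x of (q,p) \<Rightarrow> q # p))"
    by (simp add: strings_Suc sum.reindex)
  also have "\<dots> = (\<Sum>q<4. \<Sum>p\<in>pauli_strings n. f (q # p))"
    by (simp add: sum.cartesian_product split_def)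
  finally show ?thesis .
qed

lemma strings_0: "pauli_strings 0 = {[]}" by (auto simp: pauli_strings_def)

lemma strings_len: "p \<in> pauli_strings n \<Longrightarrow> length p = n" by (simp add: pauli_strings_def)

definition g1 :: "complex \<Rightarrow> complex \<Rightarrow> nat \<Rightarrow> complex" where
  "g1 x y q = (if q = 0 then x else y)"

fun gw :: "complex \<Rightarrow> complex \<Rightarrow> nat list \<Rightarrow> complex" where
  "gw x y [] = 1"
| "gw x y (q # p) = g1 x y q * gw x y p"

definition TA :: "nat \<Rightarrow> complex \<Rightarrow> complex \<Rightarrow> nat \<Rightarrow> nat \<Rightarrow> nat \<Rightarrow> nat \<Rightarrow> complex" where
  "TA n x y a b c d = (\<Sum>p\<in>pauli_strings n. gw x y p * pauli p $$ (b,a) * cnj (pauli p $$ (c,d)))"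

definition TB :: "nat \<Rightarrow> complex \<Rightarrow> complex \<Rightarrow> nat \<Rightarrow> nat \<Rightarrow> nat \<Rightarrow> nat \<Rightarrow> complex" where
  "TB n x y a b c d = (\<Sum>p\<in>pauli_strings n. gw x y p * pauli p $$ (d,a) * cnj (pauli p $$ (c,b)))"

lemma sum4: "(\<Sum>q<4::nat. f q) = f 0 + f 1 + f 2 + f 3"
  by (simp add: eval_nat_numeral)

lemma lt2: "(a::nat) < 2 \<Longrightarrow> a = 0 \<or> a = 1" by auto

lemma single:
  assumes "a < 2" "b < 2" "c < 2" "d < 2"
  shows "(\<Sum>q<4. g1 x y q * pauli1 q $$ (d,a) * cnj (pauli1 q $$ (c,b)))
       = (\<Sum>q<4. g1 ((x + 3*y)/2) ((x - y)/2) q * pauli1 q $$ (b,a) * cnj (pauli1 q $$ (c,d)))"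
  using lt2[OF assms(1)] lt2[OF assms(2)] lt2[OF assms(3)] lt2[OF assms(4)]
  by (auto simp: sum4 g1_def pauli1_def mat_of_rows_list_def field_simps)

lemma TA_Suc:
  assumes "a < 2 * 2^n" "b < 2 * 2^n" "c < 2 * 2^n" "d < 2 * 2^n"
  shows "TA (Suc n) x y a b c d = (\<Sum>q<4. g1 x y q * pauli1 q $$ (b div 2^n, a div 2^n) * cnj (pauli1 q $$ (c div 2^n, d div 2^n)))
     * TA n x y (a mod 2^n) (b mod 2^n) (c mod 2^n) (d mod 2^n)"
proof -
  have "TA (Suc n) x y a b c d = (\<Sum>q<4. \<Sum>p\<in>pauli_strings n.
     (g1 x y q * pauli1 q $$ (b div 2^n, a div 2^n) * cnj (pauli1 q $$ (c div 2^n, d div 2^n)))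
     * (gw x y p * pauli p $$ (b mod 2^n, a mod 2^n) * cnj (pauli p $$ (c mod 2^n, d mod 2^n))))"
    unfolding TA_def sum_strings_Suc
  proof (intro sum.cong refl)
    fix q p assume "p \<in> pauli_strings n"
    then have l: "length p = n" by (rule strings_len)
    have e1: "pauli (q # p) $$ (b,a) = pauli1 q $$ (b div 2^n, a div 2^n) * pauli p $$ (b mod 2^n, a mod 2^n)"
      using pauli_cons_idx[of b p a q] l assms by simp
    have e2: "pauli (q # p) $$ (c,d) = pauli1 q $$ (c div 2^n, d div 2^n) * pauli p $$ (c mod 2^n, d mod 2^n)"
      using pauli_cons_idx[of c p d q] l assms by simp
    show "gw x y (q # p) * pauli (q # p) $$ (b, a) * cnj (pauli (q # p) $$ (c, d)) =
         g1 x y q * pauli1 q $$ (b div 2 ^ n, a div 2 ^ n) * cnj (pauli1 q $$ (c div 2 ^ n, d div 2 ^ n)) *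
         (gw x y p * pauli p $$ (b mod 2 ^ n, a mod 2 ^ n) * cnj (pauli p $$ (c mod 2 ^ n, d mod 2 ^ n)))"
      unfolding e1 e2 by (simp add: algebra_simps)
  qed
  also have "\<dots> = (\<Sum>q<4. g1 x y q * pauli1 q $$ (b div 2^n, a div 2^n) * cnj (pauli1 q $$ (c div 2^n, d div 2^n)))
     * TA n x y (a mod 2^n) (b mod 2^n) (c mod 2^n) (d mod 2^n)"
    unfolding TA_def by (simp add: sum_product)
  finally show ?thesis .
qed

lemma TB_Suc:
  assumes "a < 2 * 2^n" "b < 2 * 2^n" "c < 2 * 2^n" "d < 2 * 2^n"
  shows "TB (Suc n) x y a b c d = (\<Sum>q<4. g1 x y q * pauli1 q $$ (d div 2^n, a div 2^n) * cnj (pauli1 q $$ (c div 2^n, b div 2^n)))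
     * TB n x y (a mod 2^n) (b mod 2^n) (c mod 2^n) (d mod 2^n)"
proof -
  have "TB (Suc n) x y a b c d = (\<Sum>q<4. \<Sum>p\<in>pauli_strings n.
     (g1 x y q * pauli1 q $$ (d div 2^n, a div 2^n) * cnj (pauli1 q $$ (c div 2^n, b div 2^n)))
     * (gw x y p * pauli p $$ (d mod 2^n, a mod 2^n) * cnj (pauli p $$ (c mod 2^n, b mod 2^n))))"
    unfolding TB_def sum_strings_Suc
  proof (intro sum.cong refl)
    fix q p assume "p \<in> pauli_strings n"
    then have l: "length p = n" by (rule strings_len)
    have e1: "pauli (q # p) $$ (d,a) = pauli1 q $$ (d div 2^n, a div 2^n) * pauli p $$ (d mod 2^n, a mod 2^n)"
      using pauli_cons_idx[of d p a q] l assms by simp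
    have e2: "pauli (q # p) $$ (c,b) = pauli1 q $$ (c div 2^n, b div 2^n) * pauli p $$ (c mod 2^n, b mod 2^n)"
      using pauli_cons_idx[of c p b q] l assms by simp
    show "gw x y (q # p) * pauli (q # p) $$ (d, a) * cnj (pauli (q # p) $$ (c, b)) =
         g1 x y q * pauli1 q $$ (d div 2 ^ n, a div 2 ^ n) * cnj (pauli1 q $$ (c div 2 ^ n, b div 2 ^ n)) *
         (gw x y p * pauli p $$ (d mod 2 ^ n, a mod 2 ^ n) * cnj (pauli p $$ (c mod 2 ^ n, b mod 2 ^ n)))"
      unfolding e1 e2 by (simp add: algebra_simps)
  qed
  also have "\<dots> = (\<Sum>q<4. g1 x y q * pauli1 q $$ (d div 2^n, a div 2^n) * cnj (pauli1 q $$ (c div 2^n, b div 2^n)))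
     * TB n x y (a mod 2^n) (b mod 2^n) (c mod 2^n) (d mod 2^n)"
    unfolding TB_def by (simp add: sum_product)
  finally show ?thesis .
qed

lemma TB_TA:
  "a < 2^n \<Longrightarrow> b < 2^n \<Longrightarrow> c < 2^n \<Longrightarrow> d < 2^n \<Longrightarrow>
   TB n x y a b c d = TA n ((x + 3*y)/2) ((x - y)/2) a b c d"
proof (induct n arbitrary: a b c d)
  case 0
  then show ?case by (simp add: TA_def TB_def strings_0)
next
  case (Suc n)
  have dv: "a div 2^n < 2" "b div 2^n < 2" "c div 2^n < 2" "d div 2^n < 2"
    using Suc.prems by (auto simp: less_mult_imp_div_less)
  show ?case using Suc.prems
    by (simp add: TA_Suc TB_Suc single[OF dv(1-4)] Suc.hyps)
qed

lemma mult_idx: "i < dim_row A \<Longrightarrow> j < dim_col B \<Longrightarrow> dim_col A = dim_row B \<Longrightarrow> (A * B) $$ (i,j) = (\<Sum>k<dim_col A. A $$ (i,k) * B $$ (k,j))"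
  by (simp add: scalar_prod_def atLeast0LessThan)

declare index_mult_mat(1)[simp del]

lemma tr_sum: "A \<in> carrier_mat m m \<Longrightarrow> tr A = (\<Sum>i<m. A $$ (i,i))"
  by (simp add: tr_def)

lemma swap4: "(\<Sum>p\<in>S. \<Sum>a\<in>A. \<Sum>b\<in>B. \<Sum>c\<in>C. \<Sum>d\<in>D. F p a b c d) = (\<Sum>a\<in>A. \<Sum>b\<in>B. \<Sum>c\<in>C. \<Sum>d\<in>D. \<Sum>p\<in>S. F p a b c d)"
  apply (rule trans[OF sum.swap])
  apply (rule sum.cong[OF refl])
  apply (rule trans[OF sum.swap])
  apply (rule sum.cong[OF refl])
  apply (rule trans[OF sum.swap])
  apply (rule sum.cong[OF refl])
  apply (rule sum.swap)
  done

lemma pull3: "(\<Sum>x\<in>X. \<Sum>z\<in>Z. \<Sum>y\<in>Y. F x z y) = (\<Sum>y\<in>Y. \<Sum>x\<in>X. \<Sum>z\<in>Z. F x z y)"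
proof -
  have "(\<Sum>x\<in>X. \<Sum>z\<in>Z. \<Sum>y\<in>Y. F x z y) = (\<Sum>x\<in>X. \<Sum>y\<in>Y. \<Sum>z\<in>Z. F x z y)"
    by (intro sum.cong refl) (rule sum.swap)
  also have "\<dots> = (\<Sum>y\<in>Y. \<Sum>x\<in>X. \<Sum>z\<in>Z. F x z y)" by (rule sum.swap)
  finally show ?thesis .
qed

lemma rev4: "(\<Sum>d\<in>D. \<Sum>c\<in>C. \<Sum>b\<in>B. \<Sum>a\<in>A. F a b c d) = (\<Sum>a\<in>A. \<Sum>b\<in>B. \<Sum>c\<in>C. \<Sum>d\<in>D. F a b c d)"
proof -
  have "(\<Sum>d\<in>D. \<Sum>c\<in>C. \<Sum>b\<in>B. \<Sum>a\<in>A. F a b c d) = (\<Sum>d\<in>D. \<Sum>a\<in>A. \<Sum>c\<in>C. \<Sum>b\<in>B. F a b c d)"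
    by (intro sum.cong refl) (rule pull3)
  also have "\<dots> = (\<Sum>a\<in>A. \<Sum>d\<in>D. \<Sum>c\<in>C. \<Sum>b\<in>B. F a b c d)"
    by (rule sum.swap)
  also have "\<dots> = (\<Sum>a\<in>A. \<Sum>b\<in>B. \<Sum>d\<in>D. \<Sum>c\<in>C. F a b c d)"
    by (intro sum.cong refl) (rule pull3)
  also have "\<dots> = (\<Sum>a\<in>A. \<Sum>b\<in>B. \<Sum>c\<in>C. \<Sum>d\<in>D. F a b c d)"
    by (intro sum.cong refl) (rule sum.swap)
  finally show ?thesis .
qed

lemma prod4: "(\<Sum>a\<in>A. \<Sum>b\<in>B. f a b) * (\<Sum>c\<in>C. \<Sum>d\<in>D. g c d) = (\<Sum>a\<in>A. \<Sum>b\<in>B. \<Sum>c\<in>C. \<Sum>d\<in>D. f a b * (g c d :: 'a::comm_semiring_1))"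
  by (simp only: sum_distrib_right sum_distrib_left[of "f _ _"])
lemma mul4: "r * (\<Sum>a\<in>A. \<Sum>b\<in>B. \<Sum>c\<in>C. \<Sum>d\<in>D. F a b c d) = (\<Sum>a\<in>A. \<Sum>b\<in>B. \<Sum>c\<in>C. \<Sum>d\<in>D. r * (F a b c d :: 'a::comm_semiring_1))"
  by (simp only: sum_distrib_left)

lemma tr_sM:
  assumes "M \<in> carrier_mat (2^n) (2^n)" "length p = n"
  shows "tr (pauli p * M) = (\<Sum>a<2^n. \<Sum>b<2^n. M $$ (a,b) * pauli p $$ (b,a))"
proof -
  have "tr (pauli p * M) = (\<Sum>i<2^n. \<Sum>k<2^n. pauli p $$ (i,k) * M $$ (k,i))"
    using assms by (simp add: tr_def mult_idx)
  also have "\<dots> = (\<Sum>a<2^n. \<Sum>b<2^n. M $$ (a,b) * pauli p $$ (b,a))"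
    by (subst sum.swap) (simp add: mult.commute)
  finally show ?thesis .
qed

lemma tr_aN:
  assumes "N \<in> carrier_mat (2^n) (2^n)" "length p = n"
  shows "tr (mat_adjoint (pauli p) * N) = (\<Sum>c<2^n. \<Sum>d<2^n. N $$ (c,d) * cnj (pauli p $$ (c,d)))"
proof -
  have "tr (mat_adjoint (pauli p) * N) = (\<Sum>i<2^n. \<Sum>k<2^n. mat_adjoint (pauli p) $$ (i,k) * N $$ (k,i))"
    using assms by (simp add: tr_def mult_idx)
  also have "\<dots> = (\<Sum>i<2^n. \<Sum>k<2^n. cnj (pauli p $$ (k,i)) * N $$ (k,i))"
    using assms by (intro sum.cong refl) (simp add: adj_idx)
  also have "\<dots> = (\<Sum>c<2^n. \<Sum>d<2^n. N $$ (c,d) * cnj (pauli p $$ (c,d)))"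
    by (subst sum.swap) (simp add: mult.commute)
  finally show ?thesis .
qed

lemma tr_B:
  assumes "M \<in> carrier_mat (2^n) (2^n)" "N \<in> carrier_mat (2^n) (2^n)" "length p = n"
  shows "tr (pauli p * M * mat_adjoint (pauli p) * N) =
    (\<Sum>a<2^n. \<Sum>b<2^n. \<Sum>c<2^n. \<Sum>d<2^n. M $$ (a,b) * N $$ (c,d) * (pauli p $$ (d,a) * cnj (pauli p $$ (c,b))))"
proof -
  let ?s = "pauli p"
  have "tr (?s * M * mat_adjoint ?s * N) = (\<Sum>d<2^n. \<Sum>c<2^n. (?s * M * mat_adjoint ?s) $$ (d,c) * N $$ (c,d))"
    using assms by (simp add: tr_def mult_idx del: index_mult_mat(1))
  also have "\<dots> = (\<Sum>d<2^n. \<Sum>c<2^n. (\<Sum>b<2^n. (\<Sum>a<2^n. ?s $$ (d,a) * M $$ (a,b)) * cnj (?s $$ (c,b))) * N $$ (c,d))"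
    using assms by (intro sum.cong refl) (simp add: mult_idx adj_idx del: index_mult_mat(1))
  also have "\<dots> = (\<Sum>d<2^n. \<Sum>c<2^n. \<Sum>b<2^n. \<Sum>a<2^n. M $$ (a,b) * N $$ (c,d) * (?s $$ (d,a) * cnj (?s $$ (c,b))))"
    by (simp only: sum_distrib_right mul4) (intro sum.cong refl, simp add: ac_simps)
  also have "\<dots> = (\<Sum>a<2^n. \<Sum>b<2^n. \<Sum>c<2^n. \<Sum>d<2^n. M $$ (a,b) * N $$ (c,d) * (?s $$ (d,a) * cnj (?s $$ (c,b))))"
    by (rule rev4)
  finally show ?thesis .
qed

definition GA :: "nat \<Rightarrow> complex mat \<Rightarrow> complex mat \<Rightarrow> complex \<Rightarrow> complex \<Rightarrow> complex" where
  "GA n M N x y = (\<Sum>p\<in>pauli_strings n. gw x y p * (tr (pauli p * M) * tr (mat_adjoint (pauli p) * N)))"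

definition GB :: "nat \<Rightarrow> complex mat \<Rightarrow> complex mat \<Rightarrow> complex \<Rightarrow> complex \<Rightarrow> complex" where
  "GB n M N x y = (\<Sum>p\<in>pauli_strings n. gw x y p * tr (pauli p * M * mat_adjoint (pauli p) * N))"

lemma GA_T:
  assumes "M \<in> carrier_mat (2^n) (2^n)" "N \<in> carrier_mat (2^n) (2^n)"
  shows "GA n M N x y = (\<Sum>a<2^n. \<Sum>b<2^n. \<Sum>c<2^n. \<Sum>d<2^n. M $$ (a,b) * N $$ (c,d) * TA n x y a b c d)"
proof -
  have "GA n M N x y = (\<Sum>p\<in>pauli_strings n. \<Sum>a<2^n. \<Sum>b<2^n. \<Sum>c<2^n. \<Sum>d<2^n.
      M $$ (a,b) * N $$ (c,d) * (gw x y p * pauli p $$ (b,a) * cnj (pauli p $$ (c,d))))"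
    unfolding GA_def
  proof (intro sum.cong refl)
    fix p assume "p \<in> pauli_strings n"
    then have l: "length p = n" by (rule strings_len)
    show "gw x y p * (tr (pauli p * M) * tr (mat_adjoint (pauli p) * N)) = (\<Sum>a<2^n. \<Sum>b<2^n. \<Sum>c<2^n. \<Sum>d<2^n.
      M $$ (a,b) * N $$ (c,d) * (gw x y p * pauli p $$ (b,a) * cnj (pauli p $$ (c,d))))"
      unfolding tr_sM[OF assms(1) l] tr_aN[OF assms(2) l] prod4 mul4
      by (intro sum.cong refl) (simp add: ac_simps)
  qed
  also have "\<dots> = (\<Sum>a<2^n. \<Sum>b<2^n. \<Sum>c<2^n. \<Sum>d<2^n. M $$ (a,b) * N $$ (c,d) * TA n x y a b c d)"
    by (subst swap4) (simp only: TA_def sum_distrib_left)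
  finally show ?thesis .
qed

lemma GB_T:
  assumes "M \<in> carrier_mat (2^n) (2^n)" "N \<in> carrier_mat (2^n) (2^n)"
  shows "GB n M N x y = (\<Sum>a<2^n. \<Sum>b<2^n. \<Sum>c<2^n. \<Sum>d<2^n. M $$ (a,b) * N $$ (c,d) * TB n x y a b c d)"
proof -
  have "GB n M N x y = (\<Sum>p\<in>pauli_strings n. \<Sum>a<2^n. \<Sum>b<2^n. \<Sum>c<2^n. \<Sum>d<2^n.
      M $$ (a,b) * N $$ (c,d) * (gw x y p * pauli p $$ (d,a) * cnj (pauli p $$ (c,b))))"
    unfolding GB_def
  proof (intro sum.cong refl)
    fix p assume "p \<in> pauli_strings n"
    then have l: "length p = n" by (rule strings_len)
    show "gw x y p * tr (pauli p * M * mat_adjoint (pauli p) * N) = (\<Sum>a<2^n. \<Sum>b<2^n. \<Sum>c<2^n. \<Sum>d<2^n.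
      M $$ (a,b) * N $$ (c,d) * (gw x y p * pauli p $$ (d,a) * cnj (pauli p $$ (c,b))))"
      unfolding tr_B[OF assms l] mul4
      by (intro sum.cong refl) (simp add: ac_simps)
  qed
  also have "\<dots> = (\<Sum>a<2^n. \<Sum>b<2^n. \<Sum>c<2^n. \<Sum>d<2^n. M $$ (a,b) * N $$ (c,d) * TB n x y a b c d)"
    by (subst swap4) (simp only: TB_def sum_distrib_left)
  finally show ?thesis .
qed

lemma GB_GA:
  assumes "M \<in> carrier_mat (2^n) (2^n)" "N \<in> carrier_mat (2^n) (2^n)"
  shows "GB n M N x y = GA n M N ((x + 3*y)/2) ((x - y)/2)"
  unfolding GB_T[OF assms] GA_T[OF assms] by (intro sum.cong refl) (simp add: TB_TA)

lemma pweight_cons: "pweight (q # p) = (if q = 0 then 0 else 1) + pweight p"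
  by (simp add: pweight_def)

lemma pweight_le: "pweight p \<le> length p"
  by (simp add: pweight_def)

lemma gw_eq: "gw x y p = x ^ (length p - pweight p) * y ^ pweight p"
proof (induct p)
  case Nil then show ?case by (simp add: pweight_def)
next
  case (Cons q p)
  have le: "pweight p \<le> length p" by (rule pweight_le)
  show ?case
  proof (cases "q = 0")
    case True
    then have "length (q # p) - pweight (q # p) = Suc (length p - pweight p)"
      using le by (simp add: pweight_cons)
    then show ?thesis using True Cons by (simp add: pweight_cons g1_def)
  next
    case False
    then have "length (q # p) - pweight (q # p) = length p - pweight p"
      using le by (simp add: pweight_cons)
    then show ?thesis using False Cons by (simp add: pweight_cons g1_def)
  qed
qed

lemma sum_by_weight:
  "(\<Sum>p\<in>pauli_strings n. f p) = (\<Sum>i\<le>n. \<Sum>p\<in>{p \<in> pauli_strings n. pweight p = i}. f p)"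
  using strings_finite[of n]
  by (intro sum.group[symmetric]) (auto simp: pauli_strings_def intro: order.trans[OF pweight_le])

definition Aw :: "nat \<Rightarrow> complex mat \<Rightarrow> nat \<Rightarrow> complex" where
  "Aw n P i = (\<Sum>p \<in> {p \<in> pauli_strings n. pweight p = i}.
        tr (pauli p * P) * tr (mat_adjoint (pauli p) * P))"

definition Bw :: "nat \<Rightarrow> complex mat \<Rightarrow> nat \<Rightarrow> complex" where
  "Bw n P i = (\<Sum>p \<in> {p \<in> pauli_strings n. pweight p = i}.
        tr (pauli p * P * mat_adjoint (pauli p) * P))"

lemma GA_w: "GA n P P x y = (\<Sum>i\<le>n. x ^ (n - i) * y ^ i * Aw n P i)"
  unfolding GA_def Aw_def sum_by_weight[where n=n] sum_distrib_left
  by (intro sum.cong refl) (simp add: gw_eq strings_len)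

lemma GB_w: "GB n P P x y = (\<Sum>i\<le>n. x ^ (n - i) * y ^ i * Bw n P i)"
  unfolding GB_def Bw_def sum_by_weight[where n=n] sum_distrib_left
  by (intro sum.cong refl) (simp add: gw_eq strings_len)

lemma kraw_poly:
  assumes "l \<le> n"
  shows "(1 - t) ^ l * (1 + 3 * t) ^ (n - l) = (\<Sum>i\<le>n. complex_of_real (kraw n i l) * t ^ i)"
proof -
  have e1: "(1 - t) ^ l = (\<Sum>j\<le>l. of_nat (l choose j) * (-1) ^ j * t ^ j)"
  proof -
    have "(1 - t) ^ l = (-t + 1) ^ l" by (simp only: uminus_add_conv_diff)
    also have "\<dots> = (\<Sum>j\<le>l. of_nat (l choose j) * (-t) ^ j * 1 ^ (l - j))" by (rule binomial_ring)
    also have "\<dots> = (\<Sum>j\<le>l. of_nat (l choose j) * (-1) ^ j * t ^ j)"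
      by (intro sum.cong refl) (simp only: power_one mult_1_right power_minus[of t] mult.assoc)
    finally show ?thesis .
  qed
  have e2: "(1 + 3 * t) ^ (n - l) = (\<Sum>j\<le>n - l. of_nat ((n - l) choose j) * 3 ^ j * t ^ j)"
  proof -
    have "(1 + 3 * t) ^ (n - l) = (3 * t + 1) ^ (n - l)" by (simp only: add.commute)
    also have "\<dots> = (\<Sum>j\<le>n - l. of_nat ((n - l) choose j) * (3 * t) ^ j * 1 ^ (n - l - j))" by (rule binomial_ring)
    also have "\<dots> = (\<Sum>j\<le>n - l. of_nat ((n - l) choose j) * 3 ^ j * t ^ j)"
      by (intro sum.cong refl) (simp only: power_one mult_1_right power_mult_distrib mult.assoc)
    finally show ?thesis .
  qed
  have "(1 - t) ^ l * (1 + 3 * t) ^ (n - l) = (\<Sum>r\<le>l + (n - l).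
     (\<Sum>k\<le>r. (of_nat (l choose k) * (-1) ^ k) * (of_nat ((n - l) choose (r - k)) * 3 ^ (r - k))) * t ^ r)"
    unfolding e1 e2
    by (rule polynomial_product) simp_all
  also have "\<dots> = (\<Sum>i\<le>n. complex_of_real (kraw n i l) * t ^ i)"
    using assms by (intro sum.cong) (simp_all add: kraw_def atLeast0AtMost ac_simps)
  finally show ?thesis .
qed

lemma half_pow:
  assumes "l \<le> n"
  shows "((1 + 3 * t) / 2) ^ (n - l) * ((1 - t) / 2) ^ l = (1 / 2 ^ n) * (\<Sum>i\<le>n. complex_of_real (kraw n i l) * t ^ i)"
proof -
  have "((1 + 3 * t) / 2) ^ (n - l) * ((1 - t) / 2) ^ l = ((1 - t) ^ l * (1 + 3 * t) ^ (n - l)) / (2 ^ (n - l) * 2 ^ l)"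
    by (simp add: power_divide)
  also have "(2::complex) ^ (n - l) * 2 ^ l = 2 ^ n"
    using assms by (simp add: power_add[symmetric])
  finally show ?thesis using kraw_poly[OF assms, of t] by simp
qed

lemma macw:
  assumes P: "P \<in> carrier_mat (2^n) (2^n)" and i: "i \<le> n"
  shows "Bw n P i = (1 / 2 ^ n) * (\<Sum>l\<le>n. complex_of_real (kraw n i l) * Aw n P l)"
proof -
  have "\<forall>t. (\<Sum>i\<le>n. Bw n P i * t ^ i) = (\<Sum>i\<le>n. ((1 / 2 ^ n) * (\<Sum>l\<le>n. complex_of_real (kraw n i l) * Aw n P l)) * t ^ i)"
  proof
    fix t :: complex
    have "(\<Sum>i\<le>n. Bw n P i * t ^ i) = GB n P P 1 t"
      by (simp add: GB_w ac_simps)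
    also have "\<dots> = GA n P P ((1 + 3 * t) / 2) ((1 - t) / 2)"
      using GB_GA[OF P P] by simp
    also have "\<dots> = (\<Sum>l\<le>n. ((1 + 3 * t) / 2) ^ (n - l) * ((1 - t) / 2) ^ l * Aw n P l)"
      by (rule GA_w)
    also have "\<dots> = (\<Sum>l\<le>n. \<Sum>i\<le>n. (1 / 2 ^ n) * complex_of_real (kraw n i l) * Aw n P l * t ^ i)"
    proof (intro sum.cong refl)
      fix l assume "l \<in> {..n}"
      then have "l \<le> n" by simp
      then show "((1 + 3 * t) / 2) ^ (n - l) * ((1 - t) / 2) ^ l * Aw n P l =
          (\<Sum>i\<le>n. (1 / 2 ^ n) * complex_of_real (kraw n i l) * Aw n P l * t ^ i)"
        unfolding half_pow[OF \<open>l \<le> n\<close>] by (simp add: sum_distrib_left sum_distrib_right ac_simps)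
    qed
    also have "\<dots> = (\<Sum>i\<le>n. ((1 / 2 ^ n) * (\<Sum>l\<le>n. complex_of_real (kraw n i l) * Aw n P l)) * t ^ i)"
      by (subst sum.swap) (simp add: sum_distrib_left sum_distrib_right ac_simps)
    finally show "(\<Sum>i\<le>n. Bw n P i * t ^ i) = (\<Sum>i\<le>n. ((1 / 2 ^ n) * (\<Sum>l\<le>n. complex_of_real (kraw n i l) * Aw n P l)) * t ^ i)" .
  qed
  then show ?thesis using i by (subst (asm) polyfun_eq_coeffs) auto
qed

lemma tr_comm:
  assumes "A \<in> carrier_mat m l" "B \<in> carrier_mat l m"
  shows "tr (A * B) = tr (B * A)"
proof -
  have "tr (A * B) = (\<Sum>i<m. \<Sum>k<l. A $$ (i,k) * B $$ (k,i))"
    using assms by (simp add: tr_def mult_idx)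
  also have "\<dots> = (\<Sum>k<l. \<Sum>i<m. B $$ (k,i) * A $$ (i,k))"
    by (subst sum.swap) (simp add: mult.commute)
  also have "\<dots> = tr (B * A)"
    using assms by (simp add: tr_def mult_idx)
  finally show ?thesis .
qed

lemma adj_carrier: "A \<in> carrier_mat m l \<Longrightarrow> mat_adjoint A \<in> carrier_mat l m"
  by (metis adj_dim carrier_matD carrier_matI)

lemma adj_mult:
  fixes A B :: "complex mat"
  assumes A: "A \<in> carrier_mat m l" and B: "B \<in> carrier_mat l r"
  shows "mat_adjoint (A * B) = mat_adjoint B * mat_adjoint A"
proof (rule eq_matI)
  show "dim_row (mat_adjoint (A * B)) = dim_row (mat_adjoint B * mat_adjoint A)" using A B by simp
  show "dim_col (mat_adjoint (A * B)) = dim_col (mat_adjoint B * mat_adjoint A)" using A B by simp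
  fix i j assume ij: "i < dim_row (mat_adjoint B * mat_adjoint A)" "j < dim_col (mat_adjoint B * mat_adjoint A)"
  then have i: "i < r" and j: "j < m" using A B by auto
  have "mat_adjoint (A * B) $$ (i, j) = cnj ((A * B) $$ (j, i))"
    using A B i j by (simp add: adj_idx)
  also have "\<dots> = cnj (\<Sum>k<l. A $$ (j,k) * B $$ (k,i))"
    using A B i j by (simp add: mult_idx)
  also have "\<dots> = (\<Sum>k<l. mat_adjoint B $$ (i,k) * mat_adjoint A $$ (k,j))"
    using A B i j by (simp add: adj_idx mult.commute)
  also have "\<dots> = (mat_adjoint B * mat_adjoint A) $$ (i, j)"
    using A B i j by (simp add: mult_idx)
  finally show "mat_adjoint (A * B) $$ (i, j) = (mat_adjoint B * mat_adjoint A) $$ (i, j)" .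
qed

lemma tr_MMadj:
  assumes "M \<in> carrier_mat m m"
  shows "tr (M * mat_adjoint M) = complex_of_real (\<Sum>i<m. \<Sum>k<m. (cmod (M $$ (i,k)))^2)"
proof -
  have "tr (M * mat_adjoint M) = (\<Sum>i<m. \<Sum>k<m. M $$ (i,k) * cnj (M $$ (i,k)))"
    using assms by (simp add: tr_def mult_idx adj_idx)
  also have "\<dots> = complex_of_real (\<Sum>i<m. \<Sum>k<m. (cmod (M $$ (i,k)))^2)"
    by (simp only: of_real_sum complex_norm_square)
  finally show ?thesis .
qed

lemma Bterm_nonneg:
  assumes P: "P \<in> carrier_mat m m" "mat_adjoint P = P" "P * P = P" and s: "s \<in> carrier_mat m m"
  shows "Re (tr (s * P * mat_adjoint s * P)) \<ge> 0"
proof -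
  let ?M = "P * s * P"
  have Mc: "?M \<in> carrier_mat m m" using P s by auto
  have sa: "mat_adjoint s \<in> carrier_mat m m" using s by (rule adj_carrier)
  have Xc: "s * P * mat_adjoint s * P \<in> carrier_mat m m"
    using P(1) s sa by (meson mult_carrier_mat)
  have PPX: "P * (P * X) = P * X" if "X \<in> carrier_mat m m" for X
    using assoc_mult_mat[of P m m P m X m] P that by simp
  have adjM: "mat_adjoint ?M = P * mat_adjoint s * P"
    using P s sa by (simp add: adj_mult[of _ m m _ m])
  have "tr (?M * mat_adjoint ?M) = tr (P * s * P * (P * mat_adjoint s * P))" by (simp add: adjM)
  also have "P * s * P * (P * mat_adjoint s * P) = P * (s * (P * P) * mat_adjoint s * P)"
    using P s sa by (simp add: assoc_mult_mat[of _ m m _ m _ m] PPX)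
  also have "\<dots> = P * (s * P * mat_adjoint s * P)" using P by simp
  also have "tr \<dots> = tr ((s * P * mat_adjoint s * P) * P)"
    using tr_comm[OF P(1) Xc] .
  also have "(s * P * mat_adjoint s * P) * P = s * P * mat_adjoint s * P"
    using P s sa by (simp add: assoc_mult_mat[of _ m m _ m _ m])
  finally have "tr (s * P * mat_adjoint s * P) = complex_of_real (\<Sum>i<m. \<Sum>k<m. (cmod (?M $$ (i,k)))^2)"
    using tr_MMadj[OF Mc] by simp
  then show ?thesis by (simp add: sum_nonneg)
qed

lemma herm_idx:
  assumes "P \<in> carrier_mat m m" "mat_adjoint P = P" "a < m" "b < m"
  shows "cnj (P $$ (a,b)) = P $$ (b,a)"
proof -
  have "mat_adjoint P $$ (b,a) = cnj (P $$ (a,b))" using adj_idx[of b P a] assms(1,3,4) by simp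
  with assms(2) show ?thesis by simp
qed

lemma tr_adj_cnj:
  assumes P: "P \<in> carrier_mat (2^n) (2^n)" "mat_adjoint P = P" and l: "length p = n"
  shows "tr (mat_adjoint (pauli p) * P) = cnj (tr (pauli p * P))"
proof -
  have "cnj (tr (pauli p * P)) = (\<Sum>a<2^n. \<Sum>b<2^n. cnj (P $$ (a,b)) * cnj (pauli p $$ (b,a)))"
    unfolding tr_sM[OF P(1) l] by simp
  also have "\<dots> = (\<Sum>a<2^n. \<Sum>b<2^n. P $$ (b,a) * cnj (pauli p $$ (b,a)))"
    using P by (intro sum.cong refl) (simp add: herm_idx)
  also have "\<dots> = (\<Sum>c<2^n. \<Sum>d<2^n. P $$ (c,d) * cnj (pauli p $$ (c,d)))"
    by (rule sum.swap)
  also have "\<dots> = tr (mat_adjoint (pauli p) * P)"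
    unfolding tr_aN[OF P(1) l] ..
  finally show ?thesis by simp
qed

lemma Aw_real:
  assumes P: "P \<in> carrier_mat (2^n) (2^n)" "mat_adjoint P = P"
  shows "Aw n P l = complex_of_real (\<Sum>p\<in>{p \<in> pauli_strings n. pweight p = l}. (cmod (tr (pauli p * P)))^2)"
  unfolding Aw_def of_real_sum
  by (intro sum.cong refl) (simp add: tr_adj_cnj[OF P] strings_len complex_norm_square del: of_real_power)

lemma Bw_Re_nonneg:
  assumes P: "P \<in> carrier_mat (2^n) (2^n)" "mat_adjoint P = P" "P * P = P"
  shows "Re (Bw n P i) \<ge> 0"
  unfolding Bw_def Re_sum
proof (rule sum_nonneg)
  fix p assume "p \<in> {p \<in> pauli_strings n. pweight p = i}"
  then have "length p = n" by (simp add: strings_len)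
  then have "pauli p \<in> carrier_mat (2^n) (2^n)" by (intro carrier_matI) simp_all
  then show "0 \<le> Re (tr (pauli p * P * mat_adjoint (pauli p) * P))" by (rule Bterm_nonneg[OF P])
qed

lemma pauli_id: "pauli (replicate m 0) = 1\<^sub>m (2 ^ m)"
proof (induct m)
  case 0 then show ?case by simp
next
  case (Suc m)
  show ?case
  proof (rule eq_matI)
    fix i j assume "i < dim_row (1\<^sub>m (2 ^ Suc m) :: complex mat)" "j < dim_col (1\<^sub>m (2 ^ Suc m) :: complex mat)"
    then have ij: "i < 2 * 2^m" "j < 2 * 2^m" by auto
    have d: "i div 2^m < 2" "j div 2^m < 2" using ij by (auto simp: less_mult_imp_div_less)
    have "pauli (replicate (Suc m) 0) $$ (i,j) = pauli1 0 $$ (i div 2^m, j div 2^m) * pauli (replicate m 0) $$ (i mod 2^m, j mod 2^m)"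
      using pauli_cons_idx[of i "replicate m 0" j 0] ij by simp
    also have "\<dots> = (if i div 2^m = j div 2^m then 1 else 0) * (if i mod 2^m = j mod 2^m then 1 else 0)"
      using d by (simp add: Suc pauli1_def)
    also have "\<dots> = (if i = j then 1 else 0)"
    proof -
      have "i = j \<longleftrightarrow> i div 2^m = j div 2^m \<and> i mod 2^m = j mod 2^m"
        by (metis div_mult_mod_eq)
      then show ?thesis by auto
    qed
    also have "\<dots> = (1\<^sub>m (2 ^ Suc m) :: complex mat) $$ (i,j)" using ij by simp
    finally show "pauli (replicate (Suc m) 0) $$ (i,j) = (1\<^sub>m (2 ^ Suc m) :: complex mat) $$ (i,j)" .
  qed (simp_all del: pauli.simps replicate_Suc)
qed

lemma weight0: "{p \<in> pauli_strings n. pweight p = 0} = {replicate n 0}"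
proof -
  have "p = replicate n 0" if "p \<in> pauli_strings n" "pweight p = 0" for p
    using that by (auto simp: pauli_strings_def pweight_def filter_empty_conv intro!: replicate_eqI)
  then show ?thesis by (auto simp: pauli_strings_def pweight_def)
qed

lemma adj_one: "mat_adjoint (1\<^sub>m m :: complex mat) = 1\<^sub>m m"
  by (rule eq_matI) (auto simp: adj_idx)

lemma Aw0:
  assumes P: "P \<in> carrier_mat (2^n) (2^n)"
  shows "Aw n P 0 = tr P * tr P"
  using P by (simp add: Aw_def weight0 pauli_id adj_one)

lemma Bw0:
  assumes P: "P \<in> carrier_mat (2^n) (2^n)" "P * P = P"
  shows "Bw n P 0 = tr P"
  using P by (simp add: Bw_def weight0 pauli_id adj_one)

lemma kraw0: "kraw n 0 l = 1"
  by (simp add: kraw_def)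

lemma krawn:
  assumes "l \<le> n"
  shows "kraw n n l = (-1) ^ l * 3 ^ (n - l)"
proof -
  have "kraw n n l = (\<Sum>j = 0..n. if j = l then (-1) ^ l * 3 ^ (n - l) else 0)"
    unfolding kraw_def
  proof (intro sum.cong refl)
    fix j assume j: "j \<in> {0..n}"
    show "real (l choose j) * real (n - l choose (n - j)) * (- 1) ^ j * 3 ^ (n - j) =
          (if j = l then (- 1) ^ l * 3 ^ (n - l) else 0)"
    proof (cases "j = l")
      case False
      then have "j > l \<or> n - j > n - l" using j assms by auto
      then show ?thesis using False by (auto simp: binomial_eq_0)
    qed simp
  qed
  also have "\<dots> = (-1) ^ l * 3 ^ (n - l)" using assms by simp
  finally show ?thesis .
qed

lemma kraw_sum:
  assumes "l \<le> n"
  shows "(\<Sum>i\<le>n. kraw n i l) = (if l = 0 then 4 ^ n else 0)"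
proof -
  have "complex_of_real (\<Sum>i\<le>n. kraw n i l) = (1 - 1) ^ l * (1 + 3 * 1) ^ (n - l)"
    using kraw_poly[OF assms, of 1] by (simp add: of_real_sum)
  also have "\<dots> = complex_of_real (if l = 0 then 4 ^ n else 0)" by simp
  finally show ?thesis by (simp only: of_real_eq_iff)
qed

lemma sum_even:
  fixes n :: nat
  assumes "\<And>l. odd l \<Longrightarrow> f l = 0"
  shows "(\<Sum>l\<le>n. f l) = (\<Sum>j = 0..n div 2. f (2 * j))"
proof -
  have inj: "inj_on (\<lambda>j. 2 * j) {0..n div 2}" by (auto simp: inj_on_def)
  have "(\<Sum>j = 0..n div 2. f (2 * j)) = (\<Sum>l\<in>(\<lambda>j. 2 * j) ` {0..n div 2}. f l)"
    by (simp add: sum.reindex[OF inj])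
  also have "\<dots> = (\<Sum>l\<le>n. f l)"
  proof (rule sum.mono_neutral_left)
    show "(\<lambda>j. 2 * j) ` {0..n div 2} \<subseteq> {..n}" by auto
    show "\<forall>i\<in>{..n} - (\<lambda>j. 2 * j) ` {0..n div 2}. f i = 0"
    proof
      fix i assume i: "i \<in> {..n} - (\<lambda>j. 2 * j) ` {0..n div 2}"
      have "odd i"
      proof
        assume "even i"
        then have "i = 2 * (i div 2)" by simp
        moreover have "i div 2 \<in> {0..n div 2}" using i by (auto intro: div_le_mono)
        ultimately show False using i by blast
      qed
      then show "f i = 0" by (rule assms)
    qed
  qed simp
  finally show ?thesis by simp
qed

lemma LP_lower:
  assumes "LP_feasible n y"
  shows "3 ^ n / 4 ^ n \<le> 3 ^ n * y 0"
proof -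
  have y: "\<And>j. j \<le> n div 2 \<Longrightarrow> y j \<ge> 0"
    and c: "\<And>i. i \<le> n \<Longrightarrow> (\<Sum>j = 0..n div 2. kraw n i (2 * j) * y j) \<ge> 0"
    and nrm: "(\<Sum>j = 0..n div 2. 3 ^ (n - 2 * j) * y j) = 1"
    using assms by (auto simp: LP_feasible_def)
  have "(4::real) ^ n * y 0 = (\<Sum>j = 0..n div 2. (\<Sum>i\<le>n. kraw n i (2 * j)) * y j)"
  proof -
    have "(\<Sum>j = 0..n div 2. (\<Sum>i\<le>n. kraw n i (2 * j)) * y j) = (\<Sum>j = 0..n div 2. if j = 0 then 4 ^ n * y j else 0)"
      by (intro sum.cong refl) (simp add: kraw_sum)
    also have "\<dots> = 4 ^ n * y 0" by simp
    finally show ?thesis by simp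
  qed
  also have "\<dots> = (\<Sum>i\<le>n. \<Sum>j = 0..n div 2. kraw n i (2 * j) * y j)"
    by (simp add: sum_distrib_right sum.swap[of _ "{0..n div 2}"])
  also have "\<dots> \<ge> (\<Sum>j = 0..n div 2. kraw n n (2 * j) * y j)"
    by (rule member_le_sum[where f = "\<lambda>i. \<Sum>j = 0..n div 2. kraw n i (2 * j) * y j"]) (auto intro: c)
  also have "(\<Sum>j = 0..n div 2. kraw n n (2 * j) * y j) = 1"
    unfolding nrm[symmetric]
    by (intro sum.cong refl) (simp add: krawn)
  finally have "1 \<le> (4::real) ^ n * y 0" .
  then have "1 / 4 ^ n \<le> y 0" by (simp add: field_simps)
  then show ?thesis by (simp add: divide_le_eq field_simps) 
qed

theorem proposition6:
  fixes n k :: nat and S :: "complex mat set" and P :: "complex mat"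
  assumes "stabilizer_code n k S P"
    and "\<forall>i. SL_A n k P (2 * i + 1) = 0"
  shows "Re (SL_B n k P n) \<le> (1 / L n) * (3 ^ n / 2 ^ (n - k))"
proof -
  have Pc: "P \<in> carrier_mat (2^n) (2^n)" and Ph: "mat_adjoint P = P" and Pi: "P * P = P"
    and trP: "tr P = of_nat (2 ^ k)"
    using assms(1) by (auto simp: stabilizer_code_def codespace_projector_def)
  define a where "a l = Re (Aw n P l)" for l
  define b where "b i = Re (Bw n P i)" for i
  have Aw_eq: "Aw n P l = complex_of_real (a l)" for l
    unfolding a_def by (subst (1 2) Aw_real[OF Pc Ph]) simp
  have a_nn: "a l \<ge> 0" for l
    unfolding a_def by (subst Aw_real[OF Pc Ph]) (simp add: sum_nonneg)
  have b_nn: "b i \<ge> 0" for i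
    unfolding b_def by (rule Bw_Re_nonneg[OF Pc Ph Pi])
  have a0: "a 0 = 4 ^ k"
    unfolding a_def Aw0[OF Pc] trP by (simp add: power_mult_distrib[symmetric])
  have b0: "b 0 = 2 ^ k"
    unfolding b_def Bw0[OF Pc Pi] trP by simp
  have bmac: "b i = (\<Sum>l\<le>n. kraw n i l * a l) / 2 ^ n" if "i \<le> n" for i
  proof -
    have "Bw n P i = complex_of_real ((\<Sum>l\<le>n. kraw n i l * a l) / 2 ^ n)"
      unfolding macw[OF Pc that] Aw_eq by (simp add: of_real_sum)
    then show ?thesis unfolding b_def by simp
  qed
  have odd0: "a l = 0" if "odd l" for l
  proof -
    obtain i where l: "l = 2 * i + 1" using \<open>odd l\<close> oddE by blast
    have "SL_A n k P l = 0" using assms(2) l by simp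
    then have "Aw n P l = 0" by (simp add: SL_A_def Aw_def)
    then show ?thesis unfolding a_def by simp
  qed
  have kn: "k \<le> n"
  proof -
    have "(2::real) ^ k = (\<Sum>l\<le>n. a l) / 2 ^ n" using bmac[of 0] b0 by (simp add: kraw0)
    moreover have "a 0 \<le> (\<Sum>l\<le>n. a l)"
      by (rule member_le_sum) (auto intro: a_nn)
    ultimately have "(4::real) ^ k \<le> 2 ^ k * 2 ^ n" using a0 by (simp add: field_simps)
    then have "(2::real) ^ k * 2 ^ k \<le> 2 ^ k * 2 ^ n" by (simp add: power_mult_distrib[symmetric])
    then have "(2::real) ^ k \<le> 2 ^ n" by simp
    then show ?thesis by simp
  qed
  define Z where "Z = (\<Sum>j = 0..n div 2. 3 ^ (n - 2 * j) * a (2 * j))"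
  have bn: "2 ^ n * b n = Z"
  proof -
    have "2 ^ n * b n = (\<Sum>l\<le>n. (-1) ^ l * 3 ^ (n - l) * a l)"
      using bmac[of n] by (simp add: krawn)
    also have "\<dots> = (\<Sum>j = 0..n div 2. (-1) ^ (2 * j) * 3 ^ (n - 2 * j) * a (2 * j))"
      by (rule sum_even) (simp add: odd0)
    also have "\<dots> = Z" unfolding Z_def by simp
    finally show ?thesis .
  qed
  have Zpos: "Z > 0"
  proof -
    have "3 ^ (n - 2 * 0) * a (2 * 0) \<le> Z"
      unfolding Z_def by (rule member_le_sum) (auto intro!: mult_nonneg_nonneg a_nn)
    moreover have "3 ^ (n - 2 * 0) * a (2 * 0) > 0" using a0 by simp
    ultimately show ?thesis by linarith
  qed
  define y where "y j = a (2 * j) / Z" for j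
  have feas: "LP_feasible n y"
    unfolding LP_feasible_def
  proof (intro conjI allI impI)
    fix j show "0 \<le> y j" unfolding y_def using a_nn Zpos by simp
  next
    fix i assume i: "i \<le> n"
    have "(\<Sum>j = 0..n div 2. kraw n i (2 * j) * y j) = (\<Sum>j = 0..n div 2. kraw n i (2 * j) * a (2 * j)) / Z"
      unfolding y_def by (simp add: sum_divide_distrib)
    also have "(\<Sum>j = 0..n div 2. kraw n i (2 * j) * a (2 * j)) = (\<Sum>l\<le>n. kraw n i l * a l)"
      by (rule sum_even[symmetric]) (simp add: odd0)
    also have "\<dots> = 2 ^ n * b i" using bmac[OF i] by simp
    finally show "0 \<le> (\<Sum>j = 0..n div 2. kraw n i (2 * j) * y j)"
      using b_nn Zpos by simp
  next
    show "(\<Sum>j = 0..n div 2. 3 ^ (n - 2 * j) * y j) = 1"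
      unfolding y_def using Zpos by (simp add: sum_divide_distrib[symmetric] Z_def[symmetric])
  qed
  define Sset where "Sset = {3 ^ n * y 0 | y. LP_feasible n y}"
  have ne: "Sset \<noteq> {}" unfolding Sset_def using feas by blast
  have lb: "\<And>x. x \<in> Sset \<Longrightarrow> 3 ^ n / 4 ^ n \<le> x" unfolding Sset_def using LP_lower by blast
  have Lup: "L n \<le> 3 ^ n * y 0"
    unfolding L_def Sset_def[symmetric]
    by (rule cInf_lower) (auto simp: Sset_def bdd_below_def intro: feas LP_lower)
  have Llow: "3 ^ n / 4 ^ n \<le> L n"
    unfolding L_def Sset_def[symmetric] by (rule cInf_greatest[OF ne lb])
  have Lpos: "L n > 0" using Llow by (smt (verit) divide_pos_pos zero_less_power)
  have SLB: "Re (SL_B n k P n) = b n / 2 ^ k"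
    unfolding b_def SL_B_def Bw_def by simp
  have y0: "3 ^ n * y 0 = 3 ^ n * 4 ^ k / (2 ^ n * b n)"
    unfolding y_def bn using a0 by simp
  have "b n / 2 ^ k = (2 ^ n * b n) / (4 ^ k * 2 ^ (n - k))"
  proof -
    have "(2::real) ^ n = 2 ^ (n - k) * 2 ^ k" using kn by (simp add: power_add[symmetric])
    moreover have "(4::real) ^ k = 2 ^ k * 2 ^ k" by (simp add: power_mult_distrib[symmetric])
    ultimately show ?thesis by (simp add: field_simps)
  qed
  also have "\<dots> = (1 / (3 ^ n * y 0)) * (3 ^ n / 2 ^ (n - k))"
    unfolding y0 using Zpos bn by (simp add: field_simps)
  also have "\<dots> \<le> (1 / L n) * (3 ^ n / 2 ^ (n - k))"
    using Lup Lpos by (intro mult_right_mono divide_left_mono) auto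
  finally show ?thesis unfolding SLB .
qed

end
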